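(* Let $G$ be an additive group and let $(X,\rho)$ be the metric space described below. Then $X$ is an $\mathbb R$-tree.
   Context: A function on an interval $(\alpha,\beta)$ is piecewise constant from the left if for every $x$ there is $\varepsilon>0$ with $f$ constant on $[x-\varepsilon,x]$. $X$ is the set of pairs $(f,a_f)$, $a_f>0$ real, $f:(a_f,+\infty)\to G$ piecewise constant from the left with $f|_{(b_f,+\infty)}\equiv0$ for some $b_f\ge a_f$. Order: $(f,a_f)\preceq(g,a_g)$ iff $a_f\le a_g$ and $f|_{(a_g,+\infty)}=g$; any two elements $p,q$ have a supremum $p\vee q$. Metric: $\rho((f,a_f),(g,a_g))=|a_f-a_g|$ if the pairs are comparable, and $\rho(p,q)=\rho(p,p\vee q)+\rho(p\vee q,q)$ otherwise. An $\mathbb R$-tree is a geodesic metric space in which any two points are joined by a unique segment and $[xy]\subset[xz]\cup[zy]$ for all $x,y,z$. *)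

theory Defs
  imports "HOL-Analysis.Analysis"
begin

text \<open>An element (f, a) of X is represented by a function f :: real \<Rightarrow> 'g together with
  the real a; only the values of f on the open ray (a, +\<infinity>) are meaningful, so we
  normalise f to be 0 on (-\<infinity>, a].\<close>

type_synonym 'g pt = "(real \<Rightarrow> 'g) \<times> real"

definition pc_left_on :: "real \<Rightarrow> (real \<Rightarrow> 'g) \<Rightarrow> bool" where
  "pc_left_on \<alpha> f \<longleftrightarrow>
     (\<forall>x. \<alpha> < x \<longrightarrow> (\<exists>\<epsilon>>0. \<alpha> < x - \<epsilon> \<and> (\<forall>y. x - \<epsilon> \<le> y \<and> y \<le> x \<longrightarrow> f y = f x)))"

definition Xset :: "('g::ab_group_add) pt set" where
  "Xset = {(f, a). 0 < a \<and> (\<forall>x. x \<le> a \<longrightarrow> f x = 0) \<and> pc_left_on a f \<and>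
                   (\<exists>b\<ge>a. \<forall>x. b < x \<longrightarrow> f x = 0)}"

definition le_pt :: "('g::ab_group_add) pt \<Rightarrow> 'g pt \<Rightarrow> bool" where
  "le_pt p q \<longleftrightarrow> snd p \<le> snd q \<and> (\<forall>x. snd q < x \<longrightarrow> fst p x = fst q x)"

definition is_ub :: "('g::ab_group_add) pt \<Rightarrow> 'g pt \<Rightarrow> 'g pt \<Rightarrow> bool" where
  "is_ub p q s \<longleftrightarrow> s \<in> Xset \<and> le_pt p s \<and> le_pt q s"

definition join_pt :: "('g::ab_group_add) pt \<Rightarrow> 'g pt \<Rightarrow> 'g pt" where
  "join_pt p q = (THE s. is_ub p q s \<and> (\<forall>u. is_ub p q u \<longrightarrow> le_pt s u))"

definition comparable_pt :: "('g::ab_group_add) pt \<Rightarrow> 'g pt \<Rightarrow> bool" where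
  "comparable_pt p q \<longleftrightarrow> le_pt p q \<or> le_pt q p"

definition rho_cmp :: "('g::ab_group_add) pt \<Rightarrow> 'g pt \<Rightarrow> real" where
  "rho_cmp p q = \<bar>snd p - snd q\<bar>"

definition rho :: "('g::ab_group_add) pt \<Rightarrow> 'g pt \<Rightarrow> real" where
  "rho p q = (if comparable_pt p q then rho_cmp p q
              else rho_cmp p (join_pt p q) + rho_cmp (join_pt p q) q)"

definition geodesic_segment :: "'a set \<Rightarrow> ('a \<Rightarrow> 'a \<Rightarrow> real) \<Rightarrow> 'a \<Rightarrow> 'a \<Rightarrow> 'a set \<Rightarrow> bool" where
  "geodesic_segment S d x y A \<longleftrightarrow>
     (\<exists>\<gamma>. (\<forall>t\<in>{0..d x y}. \<gamma> t \<in> S) \<and> \<gamma> 0 = x \<and> \<gamma> (d x y) = y \<and>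
          (\<forall>s\<in>{0..d x y}. \<forall>t\<in>{0..d x y}. d (\<gamma> s) (\<gamma> t) = \<bar>s - t\<bar>) \<and>
          A = \<gamma> ` {0..d x y})"

definition R_tree :: "'a set \<Rightarrow> ('a \<Rightarrow> 'a \<Rightarrow> real) \<Rightarrow> bool" where
  "R_tree S d \<longleftrightarrow> Metric_space S d \<and>
     (\<forall>x\<in>S. \<forall>y\<in>S. \<exists>!A. geodesic_segment S d x y A) \<and>
     (\<forall>x\<in>S. \<forall>y\<in>S. \<forall>z\<in>S. \<forall>A B C. geodesic_segment S d x y A \<and> geodesic_segment S d x z B \<and>
         geodesic_segment S d z y C \<longrightarrow> A \<subseteq> B \<union> C)"

end

theory Submission
  imports Defs
begin

definition up :: "('g::ab_group_add) pt \<Rightarrow> real \<Rightarrow> 'g pt" where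
  "up p t = ((\<lambda>x. if t < x then fst p x else 0), t)"

lemma snd_up[simp]: "snd (up p t) = t" by (simp add: up_def)

lemma up_up: "s \<le> t \<Longrightarrow> up (up p s) t = up p t"
  by (auto simp: up_def fun_eq_iff)

lemma up_eq_iff: "up p t = up q t \<longleftrightarrow> (\<forall>x>t. fst p x = fst q x)"
  by (auto simp: up_def fun_eq_iff)

lemma up_self: "p \<in> Xset \<Longrightarrow> up p (snd p) = p"
  by (cases p) (auto simp: up_def Xset_def fun_eq_iff)

lemma up_in: assumes "p \<in> Xset" "snd p \<le> t" shows "up p t \<in> Xset"
proof -
  obtain f a where p: "p = (f, a)" by (cases p)
  from assms p have a: "0 < a" "\<forall>x. x \<le> a \<longrightarrow> f x = 0" "pc_left_on a f"
    "\<exists>b\<ge>a. \<forall>x. b < x \<longrightarrow> f x = 0" and at: "a \<le> t" by (auto simp: Xset_def)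
  then obtain b where b: "\<forall>x. b < x \<longrightarrow> f x = 0" by blast
  have pc: "pc_left_on t (\<lambda>x. if t < x then f x else 0)"
    unfolding pc_left_on_def
  proof (intro allI impI)
    fix x assume tx: "t < x"
    hence ax: "a < x" using at by linarith
    obtain e where e: "e > 0" "a < x - e" "\<forall>y. x - e \<le> y \<and> y \<le> x \<longrightarrow> f y = f x"
      using a(3)[unfolded pc_left_on_def, rule_format, OF ax] by blast
    obtain d where d: "0 < d" "d < x - t" using tx dense[of 0 "x - t"] by auto
    define e' where "e' = min e d"
    have e'0: "e' > 0" "e' \<le> e" "e' \<le> d"
      unfolding e'_def using e d by auto
    have "t < x - e'" using e'0(3) d by linarith
    hence e'1: "e' > 0" "t < x - e'" "e' \<le> e" using e'0 by auto
    have e'2: "\<forall>y. x - e' \<le> y \<and> y \<le> x \<longrightarrow> (if t < y then f y else 0) = (if t < x then f x else 0)"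
    proof (intro allI impI)
      fix y assume y: "x - e' \<le> y \<and> y \<le> x"
      have "t < y" using y e'1 by linarith
      moreover have "x - e \<le> y" using y e'1 by linarith
      ultimately have "t < y" "x - e \<le> y" by auto
      moreover have "f y = f x" using e(3) \<open>x - e \<le> y\<close> y by blast
      ultimately show "(if t < y then f y else 0) = (if t < x then f x else 0)" using tx by simp
    qed
    show "\<exists>\<epsilon>>0. t < x - \<epsilon> \<and> (\<forall>y. x - \<epsilon> \<le> y \<and> y \<le> x \<longrightarrow>
        (if t < y then f y else 0) = (if t < x then f x else 0))" using e'1 e'2 by blast
  qed
  have ev: "\<exists>b'\<ge>t. \<forall>x. b' < x \<longrightarrow> (if t < x then f x else 0) = 0"
  proof (intro exI[of _ "max b t"] conjI allI impI)
    fix x assume "max b t < x"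
    hence "b < x" by simp
    thus "(if t < x then f x else 0) = 0" using b by simp
  qed simp
  have "0 < t" using a(1) at by linarith
  moreover have "\<forall>x. x \<le> t \<longrightarrow> (if t < x then f x else 0) = 0" by simp
  ultimately have "((\<lambda>x. if t < x then f x else 0), t) \<in> Xset"
    unfolding Xset_def mem_Collect_eq prod.case using pc ev by blast
  moreover have "up p t = ((\<lambda>x. if t < x then f x else 0), t)" unfolding p up_def by (simp only: fst_conv)
  ultimately show ?thesis by simp
qed

lemma le_pt_iff: "s \<in> Xset \<Longrightarrow> le_pt p s \<longleftrightarrow> snd p \<le> snd s \<and> s = up p (snd s)"
  using up_self[of s] up_eq_iff[of s "snd s" p] unfolding le_pt_def by metis

lemma jh_exists:
  assumes "p \<in> Xset" "q \<in> Xset"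
  shows "\<exists>c\<ge>max (snd p) (snd q). \<forall>t\<ge>max (snd p) (snd q). up p t = up q t \<longleftrightarrow> c \<le> t"
proof -
  obtain f a where p: "p = (f, a)" by (cases p)
  obtain g b where q: "q = (g, b)" by (cases q)
  from assms p q have pa: "pc_left_on a f" "pc_left_on b g" by (auto simp: Xset_def)
  from assms p q obtain bf bg where bf: "\<forall>x. bf < x \<longrightarrow> f x = 0" and bg: "\<forall>x. bg < x \<longrightarrow> g x = 0"
    by (auto simp: Xset_def)
  define m where "m = max a b"
  define D where "D = {x. m < x \<and> f x \<noteq> g x}"
  show ?thesis
  proof (cases "D = {}")
    case True
    then show ?thesis unfolding p q up_eq_iff
      by (intro exI[of _ m]) (auto simp: D_def m_def)
  next
    case False
    have bdd: "bdd_above D"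
    proof (rule bdd_aboveI)
      fix x assume "x \<in> D"
      hence "f x \<noteq> g x" by (simp add: D_def)
      show "x \<le> max bf bg"
      proof (rule ccontr)
        assume "\<not> x \<le> max bf bg"
        hence "bf < x" "bg < x" by auto
        thus False using bf bg \<open>f x \<noteq> g x\<close> by simp
      qed
    qed
    define c where "c = Sup D"
    have above: "f x = g x" if "x > c" "x > m" for x
      using cSup_upper[OF _ bdd, of x] that by (force simp: D_def c_def)
    from False obtain x0 where x0: "x0 \<in> D" by blast
    have "x0 \<le> c" using cSup_upper[OF x0 bdd] c_def by simp
    hence cm: "m < c" using x0 by (auto simp: D_def)
    have ac: "a < c" "b < c" using cm by (auto simp: m_def)
    obtain e1 where e1: "e1 > 0" "\<forall>y. c - e1 \<le> y \<and> y \<le> c \<longrightarrow> f y = f c"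
      using pa(1)[unfolded pc_left_on_def, rule_format, OF ac(1)] by blast
    obtain e2 where e2: "e2 > 0" "\<forall>y. c - e2 \<le> y \<and> y \<le> c \<longrightarrow> g y = g c"
      using pa(2)[unfolded pc_left_on_def, rule_format, OF ac(2)] by blast
    have "c - min e1 e2 < Sup D" using e1 e2 c_def by simp
    then obtain x where x: "x \<in> D" "c - min e1 e2 < x"
      using less_cSup_iff[OF False bdd] by blast
    have "x \<le> c" using cSup_upper[OF x(1) bdd] c_def by simp
    have m1: "c - e1 \<le> x" "c - e2 \<le> x" using x(2) by auto
    have "f x = f c" by (rule e1(2)[rule_format]) (use m1 \<open>x \<le> c\<close> in simp)
    moreover have "g x = g c" by (rule e2(2)[rule_format]) (use m1 \<open>x \<le> c\<close> in simp)
    moreover have "f x \<noteq> g x" using x(1) by (simp add: D_def)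
    ultimately have fc: "f c \<noteq> g c" by simp
    show ?thesis unfolding p q up_eq_iff
    proof (intro exI[of _ c] conjI allI impI)
      show "max (snd (f, a)) (snd (g, b)) \<le> c" using cm by (simp add: m_def)
      fix t assume t: "max (snd (f, a)) (snd (g, b)) \<le> t"
      show "(\<forall>x>t. fst (f, a) x = fst (g, b) x) = (c \<le> t)"
      proof
        assume "\<forall>x>t. fst (f, a) x = fst (g, b) x"
        hence H: "\<forall>x>t. f x = g x" by simp
        show "c \<le> t"
        proof (rule ccontr)
          assume "\<not> c \<le> t"
          hence "t < c" by simp
          hence "f c = g c" using H by blast
          with fc show False by simp
        qed
      next
        assume ct: "c \<le> t"
        have mt: "m \<le> t" using t by (simp add: m_def)
        show "\<forall>x>t. fst (f, a) x = fst (g, b) x"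
        proof (intro allI impI)
          fix x assume "t < x"
          hence "c < x" "m < x" using ct mt by linarith+
          thus "fst (f, a) x = fst (g, b) x" using above by simp
        qed
      qed
    qed
  qed
qed

definition jprop :: "('g::ab_group_add) pt \<Rightarrow> 'g pt \<Rightarrow> real \<Rightarrow> bool" where
  "jprop p q c \<longleftrightarrow> max (snd p) (snd q) \<le> c \<and> (\<forall>t\<ge>max (snd p) (snd q). up p t = up q t \<longleftrightarrow> c \<le> t)"

definition jh :: "('g::ab_group_add) pt \<Rightarrow> 'g pt \<Rightarrow> real" where
  "jh p q = (SOME c. jprop p q c)"

lemma jprop_unique: "jprop p q c1 \<Longrightarrow> jprop p q c2 \<Longrightarrow> c1 = c2"
  unfolding jprop_def by (meson order.trans order_refl antisym)

lemma jh_prop: "p \<in> Xset \<Longrightarrow> q \<in> Xset \<Longrightarrow> jprop p q (jh p q)"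
  unfolding jh_def by (rule someI_ex) (use jh_exists[of p q] in \<open>simp add: jprop_def\<close>)

lemma jh_eqI: "p \<in> Xset \<Longrightarrow> q \<in> Xset \<Longrightarrow> jprop p q c \<Longrightarrow> jh p q = c"
  using jh_prop jprop_unique by blast

lemma jh_ge: "p \<in> Xset \<Longrightarrow> q \<in> Xset \<Longrightarrow> snd p \<le> jh p q \<and> snd q \<le> jh p q"
  using jh_prop[of p q] by (auto simp: jprop_def)

lemma jh_agree: "p \<in> Xset \<Longrightarrow> q \<in> Xset \<Longrightarrow> t \<ge> snd p \<Longrightarrow> t \<ge> snd q \<Longrightarrow>
   up p t = up q t \<longleftrightarrow> jh p q \<le> t"
  using jh_prop[of p q] by (auto simp: jprop_def)

lemma jh_sym: "p \<in> Xset \<Longrightarrow> q \<in> Xset \<Longrightarrow> jh p q = jh q p"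
  by (rule jh_eqI) (use jh_prop[of q p] in \<open>auto simp: jprop_def max.commute\<close>)

lemma jh_up: "p \<in> Xset \<Longrightarrow> snd p \<le> t \<Longrightarrow> jh p (up p t) = t"
  by (rule jh_eqI) (auto simp: jprop_def up_up up_in)

lemma jh_self: "p \<in> Xset \<Longrightarrow> jh p p = snd p"
  using jh_up[of p "snd p"] up_self[of p] by simp

lemma jh_ultra: "x \<in> Xset \<Longrightarrow> y \<in> Xset \<Longrightarrow> z \<in> Xset \<Longrightarrow> jh x y \<le> max (jh x z) (jh z y)"
proof -
  assume xyz: "x \<in> Xset" "y \<in> Xset" "z \<in> Xset"
  define t where "t = max (jh x z) (jh z y)"
  have h: "snd x \<le> t" "snd y \<le> t" "snd z \<le> t" using jh_ge[OF xyz(1,3)] jh_ge[OF xyz(3,2)]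
    by (auto simp: t_def)
  have "up x t = up z t" using jh_agree[OF xyz(1,3)] h by (auto simp: t_def)
  moreover have "up z t = up y t" using jh_agree[OF xyz(3,2)] h by (auto simp: t_def)
  ultimately show ?thesis using jh_agree[OF xyz(1,2)] h by (simp add: t_def[symmetric])
qed

lemma jh_cross: assumes "p \<in> Xset" "q \<in> Xset" "snd p \<le> t1" "t1 \<le> jh p q" "snd q \<le> t2" "t2 \<le> jh p q"
  shows "jh (up p t1) (up q t2) = jh p q"
proof (rule jh_eqI)
  show "up p t1 \<in> Xset" "up q t2 \<in> Xset" using assms up_in by blast+
  show "jprop (up p t1) (up q t2) (jh p q)" unfolding jprop_def
    using assms jh_agree[OF assms(1,2)] by (auto simp: up_up)
qed


lemma le_pt_antisym: "s \<in> Xset \<Longrightarrow> u \<in> Xset \<Longrightarrow> le_pt s u \<Longrightarrow> le_pt u s \<Longrightarrow> s = u"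
  using le_pt_iff up_self by (metis order_antisym)

lemma join_eq: assumes "p \<in> Xset" "q \<in> Xset" shows "join_pt p q = up p (jh p q)"
proof -
  let ?c = "jh p q"
  let ?s = "up p ?c"
  have ge: "snd p \<le> ?c" "snd q \<le> ?c" using jh_ge[OF assms] by auto
  have sX: "?s \<in> Xset" using up_in assms ge by blast
  have eq: "up q ?c = ?s" using jh_agree[OF assms, of ?c] ge by simp
  have ub: "is_ub p q ?s" unfolding is_ub_def using sX ge eq le_pt_iff[OF sX] by auto
  have least: "le_pt ?s u" if "is_ub p q u" for u
  proof -
    from that have uX: "u \<in> Xset" and l: "le_pt p u" "le_pt q u" by (auto simp: is_ub_def)
    have h1: "snd p \<le> snd u \<and> u = up p (snd u)" by (rule le_pt_iff[OF uX, THEN iffD1, OF l(1)])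
    have h2: "snd q \<le> snd u \<and> u = up q (snd u)" by (rule le_pt_iff[OF uX, THEN iffD1, OF l(2)])
    have h: "snd p \<le> snd u" "snd q \<le> snd u" "u = up p (snd u)" "u = up q (snd u)"
      using h1 h2 by blast+
    have "up p (snd u) = up q (snd u)" using h(3,4) by metis
    hence "?c \<le> snd u" using jh_agree[OF assms, of "snd u"] h(1,2) by blast
    thus ?thesis using le_pt_iff[OF uX] h up_up by (metis snd_up)
  qed
  show ?thesis unfolding join_pt_def
  proof (rule the_equality)
    show "is_ub p q ?s \<and> (\<forall>u. is_ub p q u \<longrightarrow> le_pt ?s u)" using ub least by blast
    fix s assume s: "is_ub p q s \<and> (\<forall>u. is_ub p q u \<longrightarrow> le_pt s u)"
    have "le_pt s ?s" using s ub by blast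
    moreover have "le_pt ?s s" using least s by blast
    moreover have "s \<in> Xset" using s by (simp add: is_ub_def)
    ultimately show "s = ?s" using le_pt_antisym sX by blast
  qed
qed

lemma rho_eq: assumes "p \<in> Xset" "q \<in> Xset" shows "rho p q = 2 * jh p q - snd p - snd q"
proof (cases "comparable_pt p q")
  case True
  then show ?thesis
  proof (cases "le_pt p q")
    case True
    have "snd p \<le> snd q \<and> q = up p (snd q)" by (rule le_pt_iff[OF assms(2), THEN iffD1, OF True])
    hence "snd p \<le> snd q" "q = up p (snd q)" by blast+
    hence "jh p q = snd q" using jh_up[OF assms(1)] by metis
    then show ?thesis using True \<open>snd p \<le> snd q\<close> by (simp add: rho_def comparable_pt_def rho_cmp_def)
  next
    case False
    hence l: "le_pt q p" using True by (simp add: comparable_pt_def)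
    have "snd q \<le> snd p \<and> p = up q (snd p)" by (rule le_pt_iff[OF assms(1), THEN iffD1, OF l])
    hence "snd q \<le> snd p" "p = up q (snd p)" by blast+
    hence "jh q p = snd p" using jh_up[OF assms(2)] by metis
    hence "jh p q = snd p" using jh_sym assms by metis
    then show ?thesis using l \<open>snd q \<le> snd p\<close> by (simp add: rho_def comparable_pt_def rho_cmp_def)
  qed
next
  case False
  then show ?thesis using jh_ge[OF assms] by (simp add: rho_def rho_cmp_def join_eq[OF assms])
qed

lemma join_sym: "join_pt p q = join_pt q p"
  unfolding join_pt_def is_ub_def by metis

lemma rho_sym: "rho p q = rho q p"
  unfolding rho_def rho_cmp_def comparable_pt_def using join_sym[of p q] by auto

lemma rho_nonneg: "0 \<le> rho p q"
  unfolding rho_def rho_cmp_def by auto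

lemma metric: "Metric_space (Xset :: ('g::ab_group_add) pt set) rho"
proof
  fix x y :: "'g pt" show "0 \<le> rho x y" by (rule rho_nonneg)
  show "rho x y = rho y x" by (rule rho_sym)
next
  fix x y :: "'g pt" assume xy: "x \<in> Xset" "y \<in> Xset"
  show "rho x y = 0 \<longleftrightarrow> x = y"
  proof
    assume r0: "rho x y = 0"
    have ge: "snd x \<le> jh x y" "snd y \<le> jh x y" using jh_ge[OF xy] by auto
    have e0: "2 * jh x y - snd x - snd y = 0" using r0 rho_eq[OF xy] by simp
    have e1: "jh x y = snd x" using e0 ge by linarith
    have e2: "jh x y = snd y" using e0 ge by linarith
    have u: "up x (jh x y) = up y (jh x y)" using jh_agree[OF xy, of "jh x y"] ge by simp
    show "x = y" using u e1 e2 up_self[OF xy(1)] up_self[OF xy(2)] by metis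
  next
    assume "x = y"
    thus "rho x y = 0" using rho_eq[OF xy] jh_self[OF xy(1)] by simp
  qed
next
  fix x y z :: "'g pt" assume xyz: "x \<in> Xset" "y \<in> Xset" "z \<in> Xset"
  have u: "jh x z \<le> max (jh x y) (jh y z)" by (rule jh_ultra[OF xyz(1,3,2)])
  have g: "snd y \<le> jh x y" "snd y \<le> jh y z" using jh_ge[OF xyz(1,2)] jh_ge[OF xyz(2,3)] by auto
  have "jh x z + snd y \<le> jh x y + jh y z"
  proof (cases "jh x y \<le> jh y z")
    case True thus ?thesis using u g by (simp add: max_def)
  next
    case False thus ?thesis using u g by (simp add: max_def)
  qed
  thus "rho x z \<le> rho x y + rho y z"
    using rho_eq[OF xyz(1,3)] rho_eq[OF xyz(1,2)] rho_eq[OF xyz(2,3)] by linarith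
qed


definition gam :: "('g::ab_group_add) pt \<Rightarrow> 'g pt \<Rightarrow> real \<Rightarrow> 'g pt" where
  "gam x y s = (if s \<le> jh x y - snd x then up x (snd x + s) else up y (2 * jh x y - snd x - s))"

lemma gam_pc: assumes xyw: "x \<in> Xset" "y \<in> Xset" "w \<in> Xset" and e: "rho x w + rho w y = rho x y"
  shows "w = gam x y (rho x w)"
proof -
  define c a b where "c = jh x y" and "a = jh x w" and "b = jh w y"
  have sum: "a + b = c + snd w" using e rho_eq[OF xyw(1,3)] rho_eq[OF xyw(3,2)] rho_eq[OF xyw(1,2)]
    by (simp add: a_def b_def c_def)
  have ul: "c \<le> max a b" using jh_ultra[OF xyw(1,2,3)] by (simp add: a_def b_def c_def)
  have ga: "snd x \<le> a" "snd w \<le> a" using jh_ge[OF xyw(1,3)] by (auto simp: a_def)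
  have gb: "snd w \<le> b" "snd y \<le> b" using jh_ge[OF xyw(3,2)] by (auto simp: b_def)
  have gc: "snd x \<le> c" "snd y \<le> c" using jh_ge[OF xyw(1,2)] by (auto simp: c_def)
  have rw: "rho x w = 2 * a - snd x - snd w" using rho_eq[OF xyw(1,3)] by (simp add: a_def)
  have gx: "gam x y r = up x (snd x + r)" if "r \<le> c - snd x" for r
    using that unfolding gam_def c_def by simp
  have gy: "gam x y r = up y (2 * c - snd x - r)" if "\<not> r \<le> c - snd x" for r
    using that unfolding gam_def c_def by simp
  show ?thesis
  proof (cases "a \<le> b")
    case True
    hence ab: "a = snd w" "b = c" using sum ul ga gb by auto
    have "up x a = up w a" using jh_agree[OF xyw(1,3), of a] ga by (simp add: a_def)
    hence w: "w = up x (snd w)" using ab(1) up_self[OF xyw(3)] by metis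
    have r1: "rho x w \<le> c - snd x" using rw ab gb by linarith
    have r2: "snd x + rho x w = snd w" using rw ab by linarith
    have g: "gam x y (rho x w) = up x (snd w)" using gx[OF r1] r2 by simp
    show ?thesis using trans[OF w g[symmetric]] .
  next
    case False
    hence ab: "b = snd w" "a = c" using sum ul ga gb by auto
    have "up w b = up y b" using jh_agree[OF xyw(3,2), of b] gb by (simp add: b_def)
    hence w: "w = up y (snd w)" using ab(1) up_self[OF xyw(3)] by metis
    have cc: "up x c = up y c" using jh_agree[OF xyw(1,2), of c] gc by (simp add: c_def)
    show ?thesis
    proof (cases "rho x w \<le> c - snd x")
      case True
      hence "snd w = c" using ab ga rw by linarith
      moreover have "snd x + rho x w = c" using True ab ga rw by linarith
      ultimately have g: "gam x y (rho x w) = up y (snd w)" using gx[OF True] cc by simp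
      show ?thesis using trans[OF w g[symmetric]] .
    next
      case False
      have r2: "2 * c - snd x - rho x w = snd w" using rw ab by linarith
      have g: "gam x y (rho x w) = up y (snd w)" using gy[OF False] r2 by simp
      show ?thesis using trans[OF w g[symmetric]] .
    qed
  qed
qed

lemma gam_in: assumes "x \<in> Xset" "y \<in> Xset" "0 \<le> s" "s \<le> rho x y" shows "gam x y s \<in> Xset"
  using assms rho_eq[OF assms(1,2)] jh_ge[OF assms(1,2)] unfolding gam_def
  by (auto intro!: up_in)

lemma gam_0: assumes "x \<in> Xset" "y \<in> Xset" shows "gam x y 0 = x"
  using jh_ge[OF assms] up_self[OF assms(1)] by (simp add: gam_def)

lemma gam_D: assumes "x \<in> Xset" "y \<in> Xset" shows "gam x y (rho x y) = y"
proof -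
  have gc: "snd x \<le> jh x y" "snd y \<le> jh x y" using jh_ge[OF assms] by auto
  have cc: "up x (jh x y) = up y (jh x y)" using jh_agree[OF assms, of "jh x y"] gc by simp
  show ?thesis
  proof (cases "rho x y \<le> jh x y - snd x")
    case True
    hence "jh x y = snd y" using rho_eq[OF assms] gc by linarith
    then show ?thesis using True cc up_self[OF assms(2)] rho_eq[OF assms] by (simp add: gam_def)
  next
    case False
    then show ?thesis using up_self[OF assms(2)] rho_eq[OF assms] by (simp add: gam_def)
  qed
qed

lemma dist_up: assumes "p \<in> Xset" "snd p \<le> s" "snd p \<le> t" shows "rho (up p s) (up p t) = \<bar>s - t\<bar>"
proof -
  have *: "rho (up p s) (up p t) = t - s" if "snd p \<le> s" "s \<le> t" for s t
  proof -
    have X: "up p s \<in> Xset" "up p t \<in> Xset" using that up_in[OF assms(1)] by auto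
    have "jh (up p s) (up p t) = t" using jh_up[OF X(1), of t] that by (simp add: up_up)
    thus ?thesis using rho_eq[OF X] by simp
  qed
  show ?thesis
  proof (cases "s \<le> t")
    case True thus ?thesis using *[of s t] assms by simp
  next
    case False thus ?thesis using *[of t s] assms rho_sym[of "up p s" "up p t"] by simp
  qed
qed

lemma gam_iso: assumes xy: "x \<in> Xset" "y \<in> Xset" and s: "0 \<le> s" "s \<le> rho x y" and t: "0 \<le> t" "t \<le> rho x y"
  shows "rho (gam x y s) (gam x y t) = \<bar>s - t\<bar>"
proof -
  define c where "c = jh x y"
  have gc: "snd x \<le> c" "snd y \<le> c" using jh_ge[OF xy] by (auto simp: c_def)
  have D: "rho x y = 2 * c - snd x - snd y" using rho_eq[OF xy] by (simp add: c_def)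
  have cross: "rho (up x t1) (up y t2) = 2 * c - t1 - t2"
    if "snd x \<le> t1" "t1 \<le> c" "snd y \<le> t2" "t2 \<le> c" for t1 t2
  proof -
    have X: "up x t1 \<in> Xset" "up y t2 \<in> Xset" using that up_in[OF xy(1)] up_in[OF xy(2)] by auto
    show ?thesis using rho_eq[OF X] jh_cross[OF xy, of t1 t2] that by (simp add: c_def)
  qed
  consider "s \<le> c - snd x" "t \<le> c - snd x" | "s \<le> c - snd x" "\<not> t \<le> c - snd x"
    | "\<not> s \<le> c - snd x" "t \<le> c - snd x" | "\<not> s \<le> c - snd x" "\<not> t \<le> c - snd x" by blast
  then show ?thesis
  proof cases
    case 1 thus ?thesis using dist_up[OF xy(1), of "snd x + s" "snd x + t"] s t
      by (simp add: gam_def c_def[symmetric])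
  next
    case 2 thus ?thesis using cross[of "snd x + s" "2 * c - snd x - t"] s t D gc
      by (simp add: gam_def c_def[symmetric])
  next
    case 3 thus ?thesis using cross[of "snd x + t" "2 * c - snd x - s"] s t D gc
        rho_sym[of "up y (2 * c - snd x - s)" "up x (snd x + t)"]
      by (simp add: gam_def c_def[symmetric])
  next
    case 4 thus ?thesis using dist_up[OF xy(2), of "2 * c - snd x - s" "2 * c - snd x - t"] s t D
      by (simp add: gam_def c_def[symmetric])
  qed
qed

definition Seg :: "('g::ab_group_add) pt \<Rightarrow> 'g pt \<Rightarrow> 'g pt set" where
  "Seg x y = {w \<in> Xset. rho x w + rho w y = rho x y}"

lemma geod_Seg: assumes xy: "x \<in> Xset" "y \<in> Xset" and g: "geodesic_segment Xset rho x y A"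
  shows "A = Seg x y"
proof -
  obtain \<gamma> where g: "\<forall>t\<in>{0..rho x y}. \<gamma> t \<in> Xset" "\<gamma> 0 = x" "\<gamma> (rho x y) = y"
    "\<forall>s\<in>{0..rho x y}. \<forall>t\<in>{0..rho x y}. rho (\<gamma> s) (\<gamma> t) = \<bar>s - t\<bar>" "A = \<gamma> ` {0..rho x y}"
    using g unfolding geodesic_segment_def by blast
  have D0: "0 \<le> rho x y" by (rule rho_nonneg)
  have d: "rho x (\<gamma> s) = s" "rho (\<gamma> s) y = rho x y - s" if "s \<in> {0..rho x y}" for s
    using g(2,3) g(4)[rule_format, of 0 s] g(4)[rule_format, of s "rho x y"] that D0 by auto
  show ?thesis
  proof
    show "A \<subseteq> Seg x y" using g(1,5) d by (auto simp: Seg_def)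
    show "Seg x y \<subseteq> A"
    proof
      fix w assume w: "w \<in> Seg x y"
      hence wX: "w \<in> Xset" and e: "rho x w + rho w y = rho x y" by (auto simp: Seg_def)
      define s where "s = rho x w"
      have sI: "s \<in> {0..rho x y}" using e rho_nonneg[of w y] rho_nonneg[of x w] by (auto simp: s_def)
      have e2: "rho x (\<gamma> s) + rho (\<gamma> s) y = rho x y" using d[OF sI] by simp
      have "\<gamma> s = gam x y (rho x (\<gamma> s))" by (rule gam_pc[OF xy g(1)[rule_format, OF sI] e2])
      also have "\<dots> = gam x y s" using d(1)[OF sI] by simp
      also have "\<dots> = w" unfolding s_def by (rule gam_pc[OF xy wX e, symmetric])
      finally show "w \<in> A" using g(5) sI by blast
    qed
  qed
qed

lemma geod_ex: assumes xy: "x \<in> Xset" "y \<in> Xset" shows "geodesic_segment Xset rho x y (gam x y ` {0..rho x y})"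
  unfolding geodesic_segment_def
  using gam_in[OF xy] gam_0[OF xy] gam_D[OF xy] gam_iso[OF xy] by (intro exI[of _ "gam x y"]) auto

lemma tri_arith:
  fixes cxy cxz czy cxw cwy cwz hx hy hz hw :: real
  assumes "cxw + cwy = cxy + hw"
    and "cxy \<le> max cxw cwy" "cxy \<le> max cxz czy" "cxz \<le> max cxw cwz" "cwz \<le> max cxw cxz"
    "cwz \<le> max cwy czy" "czy \<le> max cwz cwy" "cxy \<le> max cxz czy" "czy \<le> max cxz cxy" "cxz \<le> max cxy czy"
    "cxw \<le> max cxz cwz" "cwy \<le> max cwz czy"
    "hx \<le> cxy" "hy \<le> cxy" "hx \<le> cxz" "hz \<le> cxz" "hz \<le> czy" "hy \<le> czy"
    "hx \<le> cxw" "hw \<le> cxw" "hw \<le> cwy" "hy \<le> cwy" "hw \<le> cwz" "hz \<le> cwz"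
  shows "cxw + cwz = cxz + hw \<or> cwz + cwy = czy + hw"
  using assms unfolding max_def by (auto split: if_splits)


lemma tri: assumes X: "x \<in> Xset" "y \<in> Xset" "z \<in> Xset" and w: "w \<in> Seg x y"
  shows "w \<in> Seg x z \<or> w \<in> Seg z y"
proof -
  have wX: "w \<in> Xset" and e: "rho x w + rho w y = rho x y" using w by (auto simp: Seg_def)
  have s1: "jh w x = jh x w" by (rule jh_sym[OF wX X(1)])
  have s2: "jh y z = jh z y" by (rule jh_sym[OF X(2,3)])
  have s3: "jh z w = jh w z" by (rule jh_sym[OF X(3) wX])
  have s4: "jh z x = jh x z" by (rule jh_sym[OF X(3,1)])
  have s5: "jh y x = jh x y" by (rule jh_sym[OF X(2,1)])
  have s6: "jh y w = jh w y" by (rule jh_sym[OF X(2) wX])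
  have e': "jh x w + jh w y = jh x y + snd w"
    using e rho_eq[OF X(1) wX] rho_eq[OF wX X(2)] rho_eq[OF X(1,2)] by linarith
  have u1: "jh x y \<le> max (jh x w) (jh w y)" by (rule jh_ultra[OF X(1,2) wX])
  have u2: "jh x y \<le> max (jh x z) (jh z y)" by (rule jh_ultra[OF X(1,2,3)])
  have u3: "jh x z \<le> max (jh x w) (jh w z)" by (rule jh_ultra[OF X(1,3) wX])
  have u4: "jh w z \<le> max (jh x w) (jh x z)" using jh_ultra[OF wX X(3,1)] unfolding s1 by simp
  have u5: "jh w z \<le> max (jh w y) (jh z y)" using jh_ultra[OF wX X(3,2)] unfolding s2 by simp
  have u6: "jh z y \<le> max (jh w z) (jh w y)" using jh_ultra[OF X(3,2) wX] unfolding s3 by simp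
  have u7: "jh z y \<le> max (jh x z) (jh x y)" using jh_ultra[OF X(3,2,1)] unfolding s4 by simp
  have u8: "jh x z \<le> max (jh x y) (jh z y)" using jh_ultra[OF X(1,3,2)] unfolding s2 by simp
  have u9: "jh x w \<le> max (jh x z) (jh w z)" using jh_ultra[OF X(1) wX X(3)] unfolding s3 by simp
  have u10: "jh w y \<le> max (jh w z) (jh z y)" by (rule jh_ultra[OF wX X(2,3)])
  have g1: "snd x \<le> jh x y" "snd y \<le> jh x y" using jh_ge[OF X(1,2)] by auto
  have g2: "snd x \<le> jh x z" "snd z \<le> jh x z" using jh_ge[OF X(1,3)] by auto
  have g3: "snd z \<le> jh z y" "snd y \<le> jh z y" using jh_ge[OF X(3,2)] by auto
  have g4: "snd x \<le> jh x w" "snd w \<le> jh x w" using jh_ge[OF X(1) wX] by auto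
  have g5: "snd w \<le> jh w y" "snd y \<le> jh w y" using jh_ge[OF wX X(2)] by auto
  have g6: "snd w \<le> jh w z" "snd z \<le> jh w z" using jh_ge[OF wX X(3)] by auto
  have "jh x w + jh w z = jh x z + snd w \<or> jh w z + jh w y = jh z y + snd w"
    by (rule tri_arith[OF e' u1 u2 u3 u4 u5 u6 u2 u7 u8 u9 u10 g1 g2 g3 g4 g5 g6])
  thus ?thesis
  proof
    assume h: "jh x w + jh w z = jh x z + snd w"
    have "rho x w + rho w z = rho x z"
      using h rho_eq[OF X(1) wX] rho_eq[OF wX X(3)] rho_eq[OF X(1,3)] by linarith
    thus ?thesis using wX by (simp add: Seg_def)
  next
    assume h: "jh w z + jh w y = jh z y + snd w"
    have "rho z w + rho w y = rho z y"
      using h s3 rho_eq[OF X(3) wX] rho_eq[OF wX X(2)] rho_eq[OF X(3,2)] by linarith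
    thus ?thesis using wX by (simp add: Seg_def)
  qed
qed

theorem corollary1:
  shows "R_tree (Xset :: ('g::ab_group_add) pt set) rho"
  unfolding R_tree_def
proof (intro conjI ballI allI impI)
  show "Metric_space (Xset :: 'g pt set) rho" by (rule metric)
next
  fix x y :: "'g pt" assume xy: "x \<in> Xset" "y \<in> Xset"
  show "\<exists>!A. geodesic_segment Xset rho x y A"
  proof (rule ex1I)
    show "geodesic_segment Xset rho x y (gam x y ` {0..rho x y})" by (rule geod_ex[OF xy])
    fix A assume a: "geodesic_segment Xset rho x y A"
    have "A = Seg x y" by (rule geod_Seg[OF xy a])
    moreover have "gam x y ` {0..rho x y} = Seg x y" by (rule geod_Seg[OF xy geod_ex[OF xy]])
    ultimately show "A = gam x y ` {0..rho x y}" by simp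
  qed
next
  fix x y z :: "'g pt" and A B C
  assume X: "x \<in> Xset" "y \<in> Xset" "z \<in> Xset" and
    g: "geodesic_segment Xset rho x y A \<and> geodesic_segment Xset rho x z B \<and> geodesic_segment Xset rho z y C"
  have "A = Seg x y" using geod_Seg[OF X(1,2)] g by blast
  moreover have "B = Seg x z" using geod_Seg[OF X(1,3)] g by blast
  moreover have "C = Seg z y" using geod_Seg[OF X(3,2)] g by blast
  ultimately show "A \<subseteq> B \<union> C" using tri[OF X] by blast
qed

end
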